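(* Let $\mathcal C$ be a hyper-extensive category and $H\colon\mathcal C\to\mathcal C$ a functor preserving countable coproducts and having a terminal coalgebra. Then $H$ is a cia functor: every corecursive $H$-algebra is a cia. Hence the category of corecursive $H$-algebras coincides with the category of cias for $H$ (both as full subcategories of the category of $H$-algebras).
   Context: Hyper-extensive category: countable coproducts that are universal (pullbacks along arbitrary morphisms exist and preserve them), disjoint (injections monic, pairwise pullbacks initial), and coherent (a countable family of pairwise disjoint coproduct injections into $A$ has copairing a coproduct injection). An $H$-algebra $a\colon HA\to A$ is corecursive if for every coalgebra $e\colon X\to HX$ there is a unique $s\colon X\to A$ with $s=a\cdot Hs\cdot e$. It is a cia if for every $e\colon X\to HX+A$ there is a unique $s\colon X\to A$ with $s=[a,\mathrm{id}_A]\cdot(Hs+\mathrm{id}_A)\cdot e$. A functor is a cia functor if every corecursive algebra for it is a cia. *)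

theory Defs
  imports Main
begin

record ('o, 'm) cat =
  Ob  :: "'o set"
  Ar  :: "'m set"
  Dom :: "'m \<Rightarrow> 'o"
  Cod :: "'m \<Rightarrow> 'o"
  Cmp :: "'m \<Rightarrow> 'm \<Rightarrow> 'm"   (* Cmp C g f  =  g \<circ> f, defined when Cod f = Dom g *)
  Idt :: "'o \<Rightarrow> 'm"

definition hom :: "('o, 'm) cat \<Rightarrow> 'o \<Rightarrow> 'o \<Rightarrow> 'm set" where
  "hom C a b = {f \<in> Ar C. Dom C f = a \<and> Cod C f = b}"

definition is_category :: "('o, 'm) cat \<Rightarrow> bool" where
  "is_category C \<longleftrightarrow>
     (\<forall>f\<in>Ar C. Dom C f \<in> Ob C \<and> Cod C f \<in> Ob C) \<and>
     (\<forall>a\<in>Ob C. Idt C a \<in> hom C a a) \<and>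
     (\<forall>a b c f g. f \<in> hom C a b \<longrightarrow> g \<in> hom C b c \<longrightarrow> Cmp C g f \<in> hom C a c) \<and>
     (\<forall>a b c d f g h. f \<in> hom C a b \<longrightarrow> g \<in> hom C b c \<longrightarrow> h \<in> hom C c d \<longrightarrow>
        Cmp C h (Cmp C g f) = Cmp C (Cmp C h g) f) \<and>
     (\<forall>a b f. f \<in> hom C a b \<longrightarrow> Cmp C f (Idt C a) = f \<and> Cmp C (Idt C b) f = f)"

definition is_endofunctor :: "('o, 'm) cat \<Rightarrow> ('o \<Rightarrow> 'o) \<Rightarrow> ('m \<Rightarrow> 'm) \<Rightarrow> bool" where
  "is_endofunctor C FO FA \<longleftrightarrow>
     (\<forall>a\<in>Ob C. FO a \<in> Ob C) \<and>
     (\<forall>a b f. f \<in> hom C a b \<longrightarrow> FA f \<in> hom C (FO a) (FO b)) \<and>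
     (\<forall>a\<in>Ob C. FA (Idt C a) = Idt C (FO a)) \<and>
     (\<forall>a b c f g. f \<in> hom C a b \<longrightarrow> g \<in> hom C b c \<longrightarrow> FA (Cmp C g f) = Cmp C (FA g) (FA f))"

definition is_initial :: "('o, 'm) cat \<Rightarrow> 'o \<Rightarrow> bool" where
  "is_initial C Z \<longleftrightarrow> Z \<in> Ob C \<and> (\<forall>Q\<in>Ob C. \<exists>!u. u \<in> hom C Z Q)"

definition is_mono :: "('o, 'm) cat \<Rightarrow> 'm \<Rightarrow> bool" where
  "is_mono C m \<longleftrightarrow> m \<in> Ar C \<and>
     (\<forall>g h. g \<in> Ar C \<longrightarrow> h \<in> Ar C \<longrightarrow> Cod C g = Dom C m \<longrightarrow> Cod C h = Dom C m \<longrightarrow>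
        Dom C g = Dom C h \<longrightarrow> Cmp C m g = Cmp C m h \<longrightarrow> g = h)"

text \<open>Coproduct of a family X indexed by a set I of naturals (every countable family
  can be so indexed), with apex P and injections \<iota>.\<close>
definition is_coproduct ::
  "('o, 'm) cat \<Rightarrow> nat set \<Rightarrow> (nat \<Rightarrow> 'o) \<Rightarrow> 'o \<Rightarrow> (nat \<Rightarrow> 'm) \<Rightarrow> bool" where
  "is_coproduct C I X P \<iota> \<longleftrightarrow>
     P \<in> Ob C \<and> (\<forall>i\<in>I. X i \<in> Ob C \<and> \<iota> i \<in> hom C (X i) P) \<and>
     (\<forall>Q f. Q \<in> Ob C \<longrightarrow> (\<forall>i\<in>I. f i \<in> hom C (X i) Q) \<longrightarrow>
        (\<exists>!u. u \<in> hom C P Q \<and> (\<forall>i\<in>I. Cmp C u (\<iota> i) = f i)))"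

definition has_countable_coproducts :: "('o, 'm) cat \<Rightarrow> bool" where
  "has_countable_coproducts C \<longleftrightarrow>
     (\<forall>(I::nat set) X. (\<forall>i\<in>I. X i \<in> Ob C) \<longrightarrow> (\<exists>P \<iota>. is_coproduct C I X P \<iota>))"

definition is_pullback :: "('o, 'm) cat \<Rightarrow> 'm \<Rightarrow> 'm \<Rightarrow> 'o \<Rightarrow> 'm \<Rightarrow> 'm \<Rightarrow> bool" where
  "is_pullback C f g P p q \<longleftrightarrow>
     f \<in> Ar C \<and> g \<in> Ar C \<and> Cod C f = Cod C g \<and>
     P \<in> Ob C \<and> p \<in> hom C P (Dom C f) \<and> q \<in> hom C P (Dom C g) \<and>
     Cmp C f p = Cmp C g q \<and>
     (\<forall>W x y. x \<in> hom C W (Dom C f) \<longrightarrow> y \<in> hom C W (Dom C g) \<longrightarrow> Cmp C f x = Cmp C g y \<longrightarrow>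
        (\<exists>!u. u \<in> hom C W P \<and> Cmp C p u = x \<and> Cmp C q u = y))"

definition coproducts_universal :: "('o, 'm) cat \<Rightarrow> bool" where
  "coproducts_universal C \<longleftrightarrow>
     (\<forall>I X P \<iota> B f. is_coproduct C I X P \<iota> \<longrightarrow> f \<in> hom C B P \<longrightarrow>
        (\<exists>Y p q. \<forall>i\<in>I. is_pullback C (\<iota> i) f (Y i) (p i) (q i)) \<and>
        (\<forall>Y p q. (\<forall>i\<in>I. is_pullback C (\<iota> i) f (Y i) (p i) (q i)) \<longrightarrow>
           is_coproduct C I Y B q))"

definition coproducts_disjoint :: "('o, 'm) cat \<Rightarrow> bool" where
  "coproducts_disjoint C \<longleftrightarrow>
     (\<forall>I X P \<iota>. is_coproduct C I X P \<iota> \<longrightarrow>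
        (\<forall>i\<in>I. is_mono C (\<iota> i)) \<and>
        (\<forall>i\<in>I. \<forall>j\<in>I. i \<noteq> j \<longrightarrow>
           (\<exists>Z p q. is_pullback C (\<iota> i) (\<iota> j) Z p q) \<and>
           (\<forall>Z p q. is_pullback C (\<iota> i) (\<iota> j) Z p q \<longrightarrow> is_initial C Z)))"

definition is_coproduct_injection :: "('o, 'm) cat \<Rightarrow> 'm \<Rightarrow> bool" where
  "is_coproduct_injection C m \<longleftrightarrow> m \<in> Ar C \<and>
     (\<exists>B n. is_coproduct C {0, 1} (\<lambda>i. if i = 0 then Dom C m else B) (Cod C m)
                          (\<lambda>i. if i = 0 then m else n))"

definition disjoint_morphs :: "('o, 'm) cat \<Rightarrow> 'm \<Rightarrow> 'm \<Rightarrow> bool" where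
  "disjoint_morphs C f g \<longleftrightarrow> (\<exists>Z p q. is_pullback C f g Z p q \<and> is_initial C Z)"

definition coproducts_coherent :: "('o, 'm) cat \<Rightarrow> bool" where
  "coproducts_coherent C \<longleftrightarrow>
     (\<forall>I B P \<iota> A m u. is_coproduct C I B P \<iota> \<longrightarrow> A \<in> Ob C \<longrightarrow>
        (\<forall>i\<in>I. m i \<in> hom C (B i) A \<and> is_coproduct_injection C (m i)) \<longrightarrow>
        (\<forall>i\<in>I. \<forall>j\<in>I. i \<noteq> j \<longrightarrow> disjoint_morphs C (m i) (m j)) \<longrightarrow>
        u \<in> hom C P A \<longrightarrow> (\<forall>i\<in>I. Cmp C u (\<iota> i) = m i) \<longrightarrow>
        is_coproduct_injection C u)"

definition hyper_extensive :: "('o, 'm) cat \<Rightarrow> bool" where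
  "hyper_extensive C \<longleftrightarrow> is_category C \<and> has_countable_coproducts C \<and>
     coproducts_universal C \<and> coproducts_disjoint C \<and> coproducts_coherent C"

definition preserves_countable_coproducts ::
  "('o, 'm) cat \<Rightarrow> ('o \<Rightarrow> 'o) \<Rightarrow> ('m \<Rightarrow> 'm) \<Rightarrow> bool" where
  "preserves_countable_coproducts C FO FA \<longleftrightarrow>
     (\<forall>I X P \<iota>. is_coproduct C I X P \<iota> \<longrightarrow>
        is_coproduct C I (\<lambda>i. FO (X i)) (FO P) (\<lambda>i. FA (\<iota> i)))"

definition has_terminal_coalgebra :: "('o, 'm) cat \<Rightarrow> ('o \<Rightarrow> 'o) \<Rightarrow> ('m \<Rightarrow> 'm) \<Rightarrow> bool" where
  "has_terminal_coalgebra C FO FA \<longleftrightarrow>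
     (\<exists>T t. T \<in> Ob C \<and> t \<in> hom C T (FO T) \<and>
        (\<forall>X e. X \<in> Ob C \<longrightarrow> e \<in> hom C X (FO X) \<longrightarrow>
           (\<exists>!h. h \<in> hom C X T \<and> Cmp C t h = Cmp C (FA h) e)))"

definition corecursive :: "('o, 'm) cat \<Rightarrow> ('o \<Rightarrow> 'o) \<Rightarrow> ('m \<Rightarrow> 'm) \<Rightarrow> 'o \<Rightarrow> 'm \<Rightarrow> bool" where
  "corecursive C FO FA A a \<longleftrightarrow>
     (\<forall>X e. X \<in> Ob C \<longrightarrow> e \<in> hom C X (FO X) \<longrightarrow>
        (\<exists>!s. s \<in> hom C X A \<and> s = Cmp C a (Cmp C (FA s) e)))"

text \<open>For e : X \<rightarrow> HX + A (HX + A any binary coproduct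
  with injections \<iota> 0, \<iota> 1), the map [a, id] \<cdot> (Hs + id) : HX + A \<rightarrow> A is the
  unique u with u \<cdot> \<iota> 0 = a \<cdot> Hs and u \<cdot> \<iota> 1 = id.\<close>
definition is_cia :: "('o, 'm) cat \<Rightarrow> ('o \<Rightarrow> 'o) \<Rightarrow> ('m \<Rightarrow> 'm) \<Rightarrow> 'o \<Rightarrow> 'm \<Rightarrow> bool" where
  "is_cia C FO FA A a \<longleftrightarrow>
     (\<forall>X S \<iota> e. X \<in> Ob C \<longrightarrow>
        is_coproduct C {0, 1} (\<lambda>i. if i = 0 then FO X else A) S \<iota> \<longrightarrow>
        e \<in> hom C X S \<longrightarrow>
        (\<exists>!s. s \<in> hom C X A \<and>
           (\<forall>u. u \<in> hom C S A \<longrightarrow> Cmp C u (\<iota> 0) = Cmp C a (FA s) \<longrightarrow>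
                Cmp C u (\<iota> 1) = Idt C A \<longrightarrow> s = Cmp C u e)))"

end

theory Submission
  imports Defs
begin


locale cat =
  fixes C :: "('o,'m) cat"
  assumes iscat: "is_category C"
begin

abbreviation cmp (infixr "\<cdot>" 55) where "g \<cdot> f \<equiv> Cmp C g f"

lemma homD: "f \<in> hom C a b \<Longrightarrow> f \<in> Ar C \<and> Dom C f = a \<and> Cod C f = b"
  by (simp add: hom_def)

lemma homI: "f \<in> Ar C \<Longrightarrow> Dom C f = a \<Longrightarrow> Cod C f = b \<Longrightarrow> f \<in> hom C a b"
  by (simp add: hom_def)

lemma hom_self: "f \<in> Ar C \<Longrightarrow> f \<in> hom C (Dom C f) (Cod C f)"
  by (simp add: hom_def)

lemma ar_ob: "f \<in> Ar C \<Longrightarrow> Dom C f \<in> Ob C \<and> Cod C f \<in> Ob C"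
  using iscat by (simp add: is_category_def)

lemma hom_ob: "f \<in> hom C a b \<Longrightarrow> a \<in> Ob C \<and> b \<in> Ob C"
  using ar_ob homD by metis

lemma comp_hom: "f \<in> hom C a b \<Longrightarrow> g \<in> hom C b c \<Longrightarrow> g \<cdot> f \<in> hom C a c"
  using iscat unfolding is_category_def by blast

lemma comp_Ar[simp]: "f \<in> Ar C \<Longrightarrow> g \<in> Ar C \<Longrightarrow> Cod C f = Dom C g \<Longrightarrow> g \<cdot> f \<in> Ar C"
proof -
  assume a: "f \<in> Ar C" "g \<in> Ar C" "Cod C f = Dom C g"
  have "g \<cdot> f \<in> hom C (Dom C f) (Cod C g)"
    by (rule comp_hom[of f _ "Cod C f"]) (use a in \<open>simp_all add: hom_def\<close>)
  then show ?thesis by (simp add: hom_def)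
qed

lemma Dom_comp[simp]: "f \<in> Ar C \<Longrightarrow> g \<in> Ar C \<Longrightarrow> Cod C f = Dom C g \<Longrightarrow> Dom C (g \<cdot> f) = Dom C f"
proof -
  assume a: "f \<in> Ar C" "g \<in> Ar C" "Cod C f = Dom C g"
  have "g \<cdot> f \<in> hom C (Dom C f) (Cod C g)"
    by (rule comp_hom[of f _ "Cod C f"]) (use a in \<open>simp_all add: hom_def\<close>)
  then show ?thesis by (simp add: hom_def)
qed

lemma Cod_comp[simp]: "f \<in> Ar C \<Longrightarrow> g \<in> Ar C \<Longrightarrow> Cod C f = Dom C g \<Longrightarrow> Cod C (g \<cdot> f) = Cod C g"
proof -
  assume a: "f \<in> Ar C" "g \<in> Ar C" "Cod C f = Dom C g"
  have "g \<cdot> f \<in> hom C (Dom C f) (Cod C g)"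
    by (rule comp_hom[of f _ "Cod C f"]) (use a in \<open>simp_all add: hom_def\<close>)
  then show ?thesis by (simp add: hom_def)
qed

lemma assoc[simp]: "f \<in> Ar C \<Longrightarrow> g \<in> Ar C \<Longrightarrow> h \<in> Ar C \<Longrightarrow> Cod C f = Dom C g \<Longrightarrow> Cod C g = Dom C h
   \<Longrightarrow> (h \<cdot> g) \<cdot> f = h \<cdot> g \<cdot> f"
  using iscat unfolding is_category_def
  by (metis hom_self)

lemma reassoc: "g \<cdot> f = k \<Longrightarrow> f \<in> Ar C \<Longrightarrow> g \<in> Ar C \<Longrightarrow> x \<in> Ar C \<Longrightarrow> Cod C x = Dom C f \<Longrightarrow> Cod C f = Dom C g
   \<Longrightarrow> g \<cdot> f \<cdot> x = k \<cdot> x"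
  by (metis assoc)

lemma id_hom: "a \<in> Ob C \<Longrightarrow> Idt C a \<in> hom C a a"
  using iscat unfolding is_category_def by blast

lemma id_Ar[simp]: "a \<in> Ob C \<Longrightarrow> Idt C a \<in> Ar C"
  using id_hom homD by blast
lemma id_Dom[simp]: "a \<in> Ob C \<Longrightarrow> Dom C (Idt C a) = a"
  using id_hom homD by blast
lemma id_Cod[simp]: "a \<in> Ob C \<Longrightarrow> Cod C (Idt C a) = a"
  using id_hom homD by blast

lemma idr[simp]: "f \<in> Ar C \<Longrightarrow> f \<cdot> Idt C (Dom C f) = f"
  using iscat unfolding is_category_def by (metis hom_self)
lemma idl[simp]: "f \<in> Ar C \<Longrightarrow> Idt C (Cod C f) \<cdot> f = f"
  using iscat unfolding is_category_def by (metis hom_self)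

lemma idl_ar[simp]: "f \<in> Ar C \<Longrightarrow> Cod C f = b \<Longrightarrow> Idt C b \<cdot> f = f"
  using idl by blast
lemma idr_ar[simp]: "f \<in> Ar C \<Longrightarrow> Dom C f = b \<Longrightarrow> f \<cdot> Idt C b = f"
  using idr by blast

end



abbreviation bcp :: "('o,'m) cat \<Rightarrow> 'o \<Rightarrow> 'o \<Rightarrow> 'o \<Rightarrow> 'm \<Rightarrow> 'm \<Rightarrow> bool" where
  "bcp C A B P i0 i1 \<equiv> is_coproduct C {0,1} (\<lambda>i. if i = 0 then A else B) P (\<lambda>i. if i = 0 then i0 else i1)"

context cat begin

lemma cp_ob: "is_coproduct C I X P \<iota> \<Longrightarrow> P \<in> Ob C"
  by (simp add: is_coproduct_def)
lemma cp_inj: "is_coproduct C I X P \<iota> \<Longrightarrow> i \<in> I \<Longrightarrow> \<iota> i \<in> hom C (X i) P"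
  by (simp add: is_coproduct_def)
lemma cp_ex: "is_coproduct C I X P \<iota> \<Longrightarrow> Q \<in> Ob C \<Longrightarrow> (\<And>i. i \<in> I \<Longrightarrow> f i \<in> hom C (X i) Q) \<Longrightarrow>
   \<exists>u. u \<in> hom C P Q \<and> (\<forall>i\<in>I. u \<cdot> \<iota> i = f i)"
  unfolding is_coproduct_def by blast
lemma cp_uniq: "is_coproduct C I X P \<iota> \<Longrightarrow> u \<in> hom C P Q \<Longrightarrow> v \<in> hom C P Q \<Longrightarrow>
   (\<And>i. i \<in> I \<Longrightarrow> u \<cdot> \<iota> i = v \<cdot> \<iota> i) \<Longrightarrow> u = v"
proof -
  assume cp: "is_coproduct C I X P \<iota>" and u: "u \<in> hom C P Q" and v: "v \<in> hom C P Q"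
    and eq: "\<And>i. i \<in> I \<Longrightarrow> u \<cdot> \<iota> i = v \<cdot> \<iota> i"
  have Q: "Q \<in> Ob C" using hom_ob u by blast
  have f: "\<forall>i\<in>I. v \<cdot> \<iota> i \<in> hom C (X i) Q" using cp_inj[OF cp] comp_hom v by blast
  from cp have H: "\<forall>Q f. Q \<in> Ob C \<longrightarrow> (\<forall>i\<in>I. f i \<in> hom C (X i) Q) \<longrightarrow>
        (\<exists>!u. u \<in> hom C P Q \<and> (\<forall>i\<in>I. u \<cdot> \<iota> i = f i))" unfolding is_coproduct_def by blast
  have "\<exists>!w. w \<in> hom C P Q \<and> (\<forall>i\<in>I. w \<cdot> \<iota> i = v \<cdot> \<iota> i)"
    using spec[OF spec[OF H, of Q], of "\<lambda>i. v \<cdot> \<iota> i"] Q f by blast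
  then show "u = v" using u v eq by blast
qed

lemma cp_cong: "is_coproduct C I X P \<iota> \<Longrightarrow> (\<And>i. i \<in> I \<Longrightarrow> X i = X' i) \<Longrightarrow> (\<And>i. i \<in> I \<Longrightarrow> \<iota> i = \<iota>' i)
   \<Longrightarrow> is_coproduct C I X' P \<iota>'"
  unfolding is_coproduct_def by simp

lemma bcp_inj0: "bcp C A B P i0 i1 \<Longrightarrow> i0 \<in> hom C A P"
  using cp_inj[of "{0,1}" _ P _ 0] by fastforce
lemma bcp_inj1: "bcp C A B P i0 i1 \<Longrightarrow> i1 \<in> hom C B P"
  using cp_inj[of "{0,1}" _ P _ 1] by fastforce
lemma bcp_ex: "bcp C A B P i0 i1 \<Longrightarrow> f0 \<in> hom C A Q \<Longrightarrow> f1 \<in> hom C B Q \<Longrightarrow>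
   \<exists>u. u \<in> hom C P Q \<and> u \<cdot> i0 = f0 \<and> u \<cdot> i1 = f1"
proof -
  assume cp: "bcp C A B P i0 i1" and f0: "f0 \<in> hom C A Q" and f1: "f1 \<in> hom C B Q"
  have Q: "Q \<in> Ob C" using hom_ob f0 by blast
  from cp_ex[OF cp Q, of "\<lambda>i. if i = 0 then f0 else f1"] f0 f1
  obtain u where "u \<in> hom C P Q" "\<forall>i\<in>{0::nat,1}. u \<cdot> (if i = 0 then i0 else i1) = (if i = 0 then f0 else f1)"
    by fastforce
  moreover from this(2) have "u \<cdot> i0 = f0" by simp
  moreover from calculation(2) have "u \<cdot> i1 = f1" by simp
  ultimately show ?thesis by blast
qed
lemma bcp_uniq: "bcp C A B P i0 i1 \<Longrightarrow> u \<in> hom C P Q \<Longrightarrow> v \<in> hom C P Q \<Longrightarrow>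
   u \<cdot> i0 = v \<cdot> i0 \<Longrightarrow> u \<cdot> i1 = v \<cdot> i1 \<Longrightarrow> u = v"
proof -
  assume a: "bcp C A B P i0 i1" "u \<in> hom C P Q" "v \<in> hom C P Q" "u \<cdot> i0 = v \<cdot> i0" "u \<cdot> i1 = v \<cdot> i1"
  show "u = v"
    by (rule cp_uniq[OF a(1) a(2) a(3)]) (use a in auto)
qed

lemma bcp_swap: "bcp C A B P i0 i1 \<Longrightarrow> bcp C B A P i1 i0"
proof -
  assume cp: "bcp C A B P i0 i1"
  show ?thesis
    unfolding is_coproduct_def
  proof (intro conjI allI impI)
    show "P \<in> Ob C" using cp cp_ob by blast
    show "\<forall>i\<in>{0,1}. (if i = 0 then B else A) \<in> Ob C \<and> (if i = 0 then i1 else i0) \<in> hom C (if i = 0 then B else A) P"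
      using bcp_inj0[OF cp] bcp_inj1[OF cp] hom_ob by auto
  next
    fix Q f assume Q: "Q \<in> Ob C" and f: "\<forall>i\<in>{0::nat,1}. f i \<in> hom C (if i = 0 then B else A) Q"
    then have f0: "f 0 \<in> hom C B Q" and f1: "f 1 \<in> hom C A Q" by auto
    obtain u where u: "u \<in> hom C P Q" "u \<cdot> i0 = f 1" "u \<cdot> i1 = f 0"
      using bcp_ex[OF cp f1 f0] by blast
    show "\<exists>!u. u \<in> hom C P Q \<and> (\<forall>i\<in>{0,1}. u \<cdot> (if i = 0 then i1 else i0) = f i)"
    proof (rule ex1I[of _ u])
      show "u \<in> hom C P Q \<and> (\<forall>i\<in>{0,1}. u \<cdot> (if i = 0 then i1 else i0) = f i)" using u by auto
    next
      fix v assume "v \<in> hom C P Q \<and> (\<forall>i\<in>{0::nat,1}. v \<cdot> (if i = 0 then i1 else i0) = f i)"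
      then show "v = u" using bcp_uniq[OF cp, of v Q u] u by auto
    qed
  qed
qed

end



locale hx = cat C for C :: "('o,'m) cat" +
  fixes FO :: "'o \<Rightarrow> 'o" and FA :: "'m \<Rightarrow> 'm"
  assumes hyp: "hyper_extensive C" and func: "is_endofunctor C FO FA"
    and pres: "preserves_countable_coproducts C FO FA"
begin

lemma has_cp: "(\<And>i. i \<in> I \<Longrightarrow> X i \<in> Ob C) \<Longrightarrow> \<exists>P \<iota>. is_coproduct C I X P \<iota>"
  using hyp unfolding hyper_extensive_def has_countable_coproducts_def by blast

lemma has_bcp: "A \<in> Ob C \<Longrightarrow> B \<in> Ob C \<Longrightarrow> \<exists>P i0 i1. bcp C A B P i0 i1"
proof -
  assume ab: "A \<in> Ob C" "B \<in> Ob C"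
  have "\<exists>P \<iota>. is_coproduct C {0::nat,1} (\<lambda>i. if i = 0 then A else B) P \<iota>"
    by (rule has_cp) (use ab in auto)
  then obtain P \<iota> where cp: "is_coproduct C {0::nat,1} (\<lambda>i. if i = 0 then A else B) P \<iota>" by blast
  have "bcp C A B P (\<iota> 0) (\<iota> 1)" by (rule cp_cong[OF cp]) auto
  then show ?thesis by blast
qed

lemma F_hom: "f \<in> hom C a b \<Longrightarrow> FA f \<in> hom C (FO a) (FO b)"
  using func unfolding is_endofunctor_def by blast
lemma F_comp: "f \<in> hom C a b \<Longrightarrow> g \<in> hom C b c \<Longrightarrow> FA (g \<cdot> f) = FA g \<cdot> FA f"
  using func unfolding is_endofunctor_def by blast
lemma F_cp: "is_coproduct C I X P \<iota> \<Longrightarrow> is_coproduct C I (\<lambda>i. FO (X i)) (FO P) (\<lambda>i. FA (\<iota> i))"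
  using pres unfolding preserves_countable_coproducts_def by blast
lemma F_bcp: "bcp C A B P i0 i1 \<Longrightarrow> bcp C (FO A) (FO B) (FO P) (FA i0) (FA i1)"
  by (drule F_cp, erule cp_cong) auto

lemma initial_uniq: "is_initial C Z \<Longrightarrow> u \<in> hom C Z Q \<Longrightarrow> v \<in> hom C Z Q \<Longrightarrow> u = v"
  unfolding is_initial_def using hom_ob by blast
lemma initial_ex: "is_initial C Z \<Longrightarrow> Q \<in> Ob C \<Longrightarrow> \<exists>u. u \<in> hom C Z Q"
  unfolding is_initial_def by blast

lemma univ_ex: "is_coproduct C I X P \<iota> \<Longrightarrow> f \<in> hom C B P \<Longrightarrow>
   \<exists>Y p q. \<forall>i\<in>I. is_pullback C (\<iota> i) f (Y i) (p i) (q i)"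
  using hyp unfolding hyper_extensive_def coproducts_universal_def by blast
lemma univ_cp: "is_coproduct C I X P \<iota> \<Longrightarrow> f \<in> hom C B P \<Longrightarrow>
   (\<forall>i\<in>I. is_pullback C (\<iota> i) f (Y i) (p i) (q i)) \<Longrightarrow> is_coproduct C I Y B q"
  using hyp unfolding hyper_extensive_def coproducts_universal_def by blast

lemma strict: "is_initial C Z \<Longrightarrow> w \<in> hom C W Z \<Longrightarrow> is_initial C W"
proof -
  assume Z: "is_initial C Z" and w: "w \<in> hom C W Z"
  have cp: "is_coproduct C {} (\<lambda>i. Z) Z (\<lambda>i. w)"
    using Z unfolding is_initial_def is_coproduct_def by auto
  have "is_coproduct C {} (\<lambda>i. Z) W (\<lambda>i. w)"
    by (rule univ_cp[OF cp w]) auto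
  then show ?thesis unfolding is_initial_def is_coproduct_def by auto
qed

lemma pbD: "is_pullback C f g P p q \<Longrightarrow> p \<in> hom C P (Dom C f) \<and> q \<in> hom C P (Dom C g) \<and> f \<cdot> p = g \<cdot> q"
  unfolding is_pullback_def by blast
lemma pbAr: "is_pullback C f g P p q \<Longrightarrow> f \<in> Ar C \<and> g \<in> Ar C \<and> Cod C f = Cod C g"
  unfolding is_pullback_def by blast
lemma pb_univ: "is_pullback C f g P p q \<Longrightarrow> x \<in> hom C W (Dom C f) \<Longrightarrow> y \<in> hom C W (Dom C g) \<Longrightarrow>
   f \<cdot> x = g \<cdot> y \<Longrightarrow> \<exists>u. u \<in> hom C W P \<and> p \<cdot> u = x \<and> q \<cdot> u = y"
  unfolding is_pullback_def by blast

definition disj :: "'m \<Rightarrow> 'm \<Rightarrow> bool" where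
  "disj f g \<longleftrightarrow> (\<forall>W x y. x \<in> hom C W (Dom C f) \<longrightarrow> y \<in> hom C W (Dom C g) \<longrightarrow> f \<cdot> x = g \<cdot> y \<longrightarrow> is_initial C W)"

lemma disjD: "disj f g \<Longrightarrow> x \<in> hom C W (Dom C f) \<Longrightarrow> y \<in> hom C W (Dom C g) \<Longrightarrow> f \<cdot> x = g \<cdot> y \<Longrightarrow> is_initial C W"
  unfolding disj_def by blast

lemma disj_sym: "disj f g \<Longrightarrow> disj g f"
  unfolding disj_def by metis

lemma cp_disj: "is_coproduct C I X P \<iota> \<Longrightarrow> i \<in> I \<Longrightarrow> j \<in> I \<Longrightarrow> i \<noteq> j \<Longrightarrow> disj (\<iota> i) (\<iota> j)"
proof -
  assume cp: "is_coproduct C I X P \<iota>" and ij: "i \<in> I" "j \<in> I" "i \<noteq> j"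
  have "(\<exists>Z p q. is_pullback C (\<iota> i) (\<iota> j) Z p q) \<and>
           (\<forall>Z p q. is_pullback C (\<iota> i) (\<iota> j) Z p q \<longrightarrow> is_initial C Z)"
    using hyp cp ij unfolding hyper_extensive_def coproducts_disjoint_def by blast
  then obtain Z p q where pb: "is_pullback C (\<iota> i) (\<iota> j) Z p q" and Z: "is_initial C Z" by blast
  show ?thesis unfolding disj_def
  proof (intro allI impI)
    fix W x y assume "x \<in> hom C W (Dom C (\<iota> i))" "y \<in> hom C W (Dom C (\<iota> j))" "\<iota> i \<cdot> x = \<iota> j \<cdot> y"
    then obtain u where "u \<in> hom C W Z" using pb_univ[OF pb] by blast
    then show "is_initial C W" using strict Z by blast
  qed
qed

lemma cp_mono: "is_coproduct C I X P \<iota> \<Longrightarrow> i \<in> I \<Longrightarrow> is_mono C (\<iota> i)"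
  using hyp unfolding hyper_extensive_def coproducts_disjoint_def by blast

lemma monoD: "is_mono C m \<Longrightarrow> g \<in> hom C W (Dom C m) \<Longrightarrow> h \<in> hom C W (Dom C m) \<Longrightarrow> m \<cdot> g = m \<cdot> h \<Longrightarrow> g = h"
  unfolding is_mono_def hom_def by auto

lemma bcp_disj: "bcp C A B P i0 i1 \<Longrightarrow> disj i0 i1"
  using cp_disj[of "{0,1}" _ P _ 0 1] by fastforce

lemma bcp_mono0: "bcp C A B P i0 i1 \<Longrightarrow> is_mono C i0"
  using cp_mono[of "{0,1}" _ P _ 0] by fastforce
lemma bcp_mono1: "bcp C A B P i0 i1 \<Longrightarrow> is_mono C i1"
  using cp_mono[of "{0,1}" _ P _ 1] by fastforce

lemma disj_precomp: "disj f g \<Longrightarrow> g \<in> Ar C \<Longrightarrow> h \<in> hom C V (Dom C g) \<Longrightarrow> disj f (g \<cdot> h)"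
  unfolding disj_def
proof (intro allI impI)
  fix W x y
  assume d: "\<forall>W x y. x \<in> hom C W (Dom C f) \<longrightarrow> y \<in> hom C W (Dom C g) \<longrightarrow> f \<cdot> x = g \<cdot> y \<longrightarrow> is_initial C W"
    and g: "g \<in> Ar C" and h: "h \<in> hom C V (Dom C g)" and x: "x \<in> hom C W (Dom C f)"
    and y: "y \<in> hom C W (Dom C (g \<cdot> h))" and eq: "f \<cdot> x = (g \<cdot> h) \<cdot> y"
  have hD: "h \<in> Ar C" "Dom C h = V" "Cod C h = Dom C g" using h homD by auto
  have yD: "y \<in> Ar C" "Dom C y = W" "Cod C y = V" using y hD g homD by auto
  have "f \<cdot> x = g \<cdot> (h \<cdot> y)" using eq hD yD g by simp
  moreover have "h \<cdot> y \<in> hom C W (Dom C g)" using hD yD by (simp add: hom_def)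
  ultimately show "is_initial C W" using d x by blast
qed

lemma retract: "bcp C Z0 Z1 Z q0 q1 \<Longrightarrow> is_initial C Z0 \<Longrightarrow> \<exists>r. r \<in> hom C Z Z1 \<and> q1 \<cdot> r = Idt C Z"
proof -
  assume cp: "bcp C Z0 Z1 Z q0 q1" and Z0: "is_initial C Z0"
  have q0: "q0 \<in> hom C Z0 Z" and q1: "q1 \<in> hom C Z1 Z" using bcp_inj0[OF cp] bcp_inj1[OF cp] .
  have Z1: "Z1 \<in> Ob C" and Z: "Z \<in> Ob C" using hom_ob q1 by auto
  obtain k where k: "k \<in> hom C Z0 Z1" using initial_ex[OF Z0 Z1] by blast
  obtain r where r: "r \<in> hom C Z Z1" "r \<cdot> q0 = k" "r \<cdot> q1 = Idt C Z1"
    using bcp_ex[OF cp k id_hom[OF Z1]] by blast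
  have qr: "q1 \<cdot> r \<in> hom C Z Z" using comp_hom r(1) q1 by blast
  have "q1 \<cdot> r = Idt C Z"
  proof (rule bcp_uniq[OF cp qr id_hom[OF Z]])
    show "(q1 \<cdot> r) \<cdot> q0 = Idt C Z \<cdot> q0"
      using initial_uniq[OF Z0] comp_hom qr q0 id_hom[OF Z] by metis
    show "(q1 \<cdot> r) \<cdot> q1 = Idt C Z \<cdot> q1"
      using r q1 homD[OF q1] homD[OF r(1)] Z1 Z by simp
  qed
  then show ?thesis using r by blast
qed

lemma factor: "bcp C A B P i0 i1 \<Longrightarrow> g \<in> hom C V P \<Longrightarrow> disj i0 g \<Longrightarrow> \<exists>h. h \<in> hom C V B \<and> g = i1 \<cdot> h"
proof -
  assume cp: "bcp C A B P i0 i1" and g: "g \<in> hom C V P" and d: "disj i0 g"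
  obtain Y p q where pb: "\<forall>i\<in>{0::nat,1}. is_pullback C (if i = 0 then i0 else i1) g (Y i) (p i) (q i)"
    using univ_ex[OF cp g] by blast
  have cpY: "is_coproduct C {0,1} Y V q" using univ_cp[OF cp g pb] .
  have cpY': "bcp C (Y 0) (Y 1) V (q 0) (q 1)" by (rule cp_cong[OF cpY]) auto
  have pb0: "is_pullback C i0 g (Y 0) (p 0) (q 0)" using pb by auto
  have pb1: "is_pullback C i1 g (Y 1) (p 1) (q 1)" using pb by auto
  have "is_initial C (Y 0)" using pbD[OF pb0] disjD[OF d] by blast
  then obtain r where r: "r \<in> hom C V (Y 1)" "q 1 \<cdot> r = Idt C V" using retract[OF cpY'] by blast
  have p1: "p 1 \<in> hom C (Y 1) B" and q1: "q 1 \<in> hom C (Y 1) V" and e1: "i1 \<cdot> p 1 = g \<cdot> q 1"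
    using pbD[OF pb1] homD[OF bcp_inj1[OF cp]] homD[OF g] by auto
  have i1: "i1 \<in> hom C B P" using bcp_inj1[OF cp] .
  have "g = g \<cdot> (q 1 \<cdot> r)" using r(2) g homD[of g] by simp
  also have "\<dots> = (g \<cdot> q 1) \<cdot> r" using homD[OF g] homD[OF q1] homD[OF r(1)] by simp
  also have "\<dots> = (i1 \<cdot> p 1) \<cdot> r" using e1 by simp
  also have "\<dots> = i1 \<cdot> (p 1 \<cdot> r)" using homD[OF i1] homD[OF p1] homD[OF r(1)] by simp
  finally show ?thesis using comp_hom[OF r(1) p1] by blast
qed

lemma cp_initial: "is_coproduct C I X P \<iota> \<Longrightarrow> (\<And>i. i \<in> I \<Longrightarrow> is_initial C (X i)) \<Longrightarrow> is_initial C P"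
proof -
  assume cp: "is_coproduct C I X P \<iota>" and ini: "\<And>i. i \<in> I \<Longrightarrow> is_initial C (X i)"
  show ?thesis unfolding is_initial_def
  proof (intro conjI ballI)
    show "P \<in> Ob C" using cp_ob[OF cp] .
    fix Q assume Q: "Q \<in> Ob C"
    have "\<forall>i\<in>I. \<exists>f. f \<in> hom C (X i) Q" using ini initial_ex Q by blast
    then obtain f where f: "\<And>i. i \<in> I \<Longrightarrow> f i \<in> hom C (X i) Q" by metis
    obtain u where u: "u \<in> hom C P Q" using cp_ex[OF cp Q f] by blast
    show "\<exists>!u. u \<in> hom C P Q"
    proof (rule ex1I[of _ u])
      show "u \<in> hom C P Q" by fact
      fix v assume v: "v \<in> hom C P Q"
      show "v = u"
      proof (rule cp_uniq[OF cp v u])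
        fix i assume i: "i \<in> I"
        show "v \<cdot> \<iota> i = u \<cdot> \<iota> i"
          using initial_uniq[OF ini[OF i]] comp_hom[OF cp_inj[OF cp i]] u v by blast
      qed
    qed
  qed
qed

end



context hx begin

lemma bcpI:
  assumes P: "P \<in> Ob C" and i0: "i0 \<in> hom C A P" and i1: "i1 \<in> hom C B P"
    and ex: "\<And>Q f0 f1. f0 \<in> hom C A Q \<Longrightarrow> f1 \<in> hom C B Q \<Longrightarrow> \<exists>u. u \<in> hom C P Q \<and> u \<cdot> i0 = f0 \<and> u \<cdot> i1 = f1"
    and un: "\<And>Q u v. u \<in> hom C P Q \<Longrightarrow> v \<in> hom C P Q \<Longrightarrow> u \<cdot> i0 = v \<cdot> i0 \<Longrightarrow> u \<cdot> i1 = v \<cdot> i1 \<Longrightarrow> u = v"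
  shows "bcp C A B P i0 i1"
  unfolding is_coproduct_def
proof (intro conjI allI impI)
  show "P \<in> Ob C" by fact
  show "\<forall>i\<in>{0,1}. (if i = 0 then A else B) \<in> Ob C \<and> (if i = 0 then i0 else i1) \<in> hom C (if i = 0 then A else B) P"
    using i0 i1 hom_ob by auto
next
  fix Q f assume Q: "Q \<in> Ob C" and f: "\<forall>i\<in>{0::nat,1}. f i \<in> hom C (if i = 0 then A else B) Q"
  then have f0: "f 0 \<in> hom C A Q" and f1: "f 1 \<in> hom C B Q" by auto
  obtain u where u: "u \<in> hom C P Q" "u \<cdot> i0 = f 0" "u \<cdot> i1 = f 1" using ex[OF f0 f1] by blast
  show "\<exists>!u. u \<in> hom C P Q \<and> (\<forall>i\<in>{0,1}. u \<cdot> (if i = 0 then i0 else i1) = f i)"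
  proof (rule ex1I[of _ u])
    show "u \<in> hom C P Q \<and> (\<forall>i\<in>{0,1}. u \<cdot> (if i = 0 then i0 else i1) = f i)" using u by auto
  next
    fix v assume "v \<in> hom C P Q \<and> (\<forall>i\<in>{0::nat,1}. v \<cdot> (if i = 0 then i0 else i1) = f i)"
    then show "v = u" using un[of v Q u] u by auto
  qed
qed

lemma inj_of_cp: "is_coproduct C I X P \<iota> \<Longrightarrow> i \<in> I \<Longrightarrow> is_coproduct_injection C (\<iota> i)"
proof -
  assume cp: "is_coproduct C I X P \<iota>" and i: "i \<in> I"
  have Xob: "\<And>j. j \<in> I \<Longrightarrow> X j \<in> Ob C" using cp unfolding is_coproduct_def by blast
  obtain R \<kappa> where cpR: "is_coproduct C (I - {i}) X R \<kappa>" using has_cp[of "I - {i}" X] Xob by blast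
  have P: "P \<in> Ob C" using cp_ob[OF cp] .
  have inj: "\<And>j. j \<in> I \<Longrightarrow> \<iota> j \<in> hom C (X j) P" using cp_inj[OF cp] .
  have kinj: "\<And>j. j \<in> I - {i} \<Longrightarrow> \<kappa> j \<in> hom C (X j) R" using cp_inj[OF cpR] .
  obtain r where r: "r \<in> hom C R P" "\<forall>j\<in>I - {i}. r \<cdot> \<kappa> j = \<iota> j"
    using cp_ex[OF cpR P, of \<iota>] inj by blast
  have "bcp C (X i) R P (\<iota> i) r"
  proof (rule bcpI[OF P inj[OF i] r(1)])
    fix Q f0 f1 assume f0: "f0 \<in> hom C (X i) Q" and f1: "f1 \<in> hom C R Q"
    have Q: "Q \<in> Ob C" using hom_ob f0 by blast
    define g where "g j = (if j = i then f0 else f1 \<cdot> \<kappa> j)" for j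
    have g: "\<And>j. j \<in> I \<Longrightarrow> g j \<in> hom C (X j) Q" unfolding g_def using f0 by (auto intro!: comp_hom[OF kinj f1])
    obtain u where u: "u \<in> hom C P Q" "\<forall>j\<in>I. u \<cdot> \<iota> j = g j" using cp_ex[OF cp Q g] by blast
    have "u \<cdot> r = f1"
    proof (rule cp_uniq[OF cpR comp_hom[OF r(1) u(1)] f1])
      fix j assume j: "j \<in> I - {i}"
      have "(u \<cdot> r) \<cdot> \<kappa> j = u \<cdot> (r \<cdot> \<kappa> j)" using kinj[OF j] r(1) u(1) by (simp add: hom_def)
      also have "\<dots> = g j" using r(2) u(2) j by auto
      finally show "(u \<cdot> r) \<cdot> \<kappa> j = f1 \<cdot> \<kappa> j" using j by (simp add: g_def)
    qed
    moreover have "u \<cdot> \<iota> i = f0" using u(2) i by (simp add: g_def)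
    ultimately show "\<exists>u. u \<in> hom C P Q \<and> u \<cdot> \<iota> i = f0 \<and> u \<cdot> r = f1" using u(1) by blast
  next
    fix Q u v assume u: "u \<in> hom C P Q" and v: "v \<in> hom C P Q" and e0: "u \<cdot> \<iota> i = v \<cdot> \<iota> i" and e1: "u \<cdot> r = v \<cdot> r"
    show "u = v"
    proof (rule cp_uniq[OF cp u v])
      fix j assume j: "j \<in> I"
      show "u \<cdot> \<iota> j = v \<cdot> \<iota> j"
      proof (cases "j = i")
        case True then show ?thesis using e0 by simp
      next
        case False
        then have j': "j \<in> I - {i}" using j by blast
        have "u \<cdot> \<iota> j = u \<cdot> (r \<cdot> \<kappa> j)" using r(2) j' by simp
        also have "\<dots> = (u \<cdot> r) \<cdot> \<kappa> j" using kinj[OF j'] r(1) u by (simp add: hom_def)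
        also have "\<dots> = (v \<cdot> r) \<cdot> \<kappa> j" using e1 by simp
        also have "\<dots> = v \<cdot> (r \<cdot> \<kappa> j)" using kinj[OF j'] r(1) v by (simp add: hom_def)
        also have "\<dots> = v \<cdot> \<iota> j" using r(2) j' by simp
        finally show ?thesis .
      qed
    qed
  qed
  moreover have "\<iota> i \<in> Ar C" "Dom C (\<iota> i) = X i" "Cod C (\<iota> i) = P" using homD[OF inj[OF i]] by auto
  ultimately show ?thesis unfolding is_coproduct_injection_def by metis
qed

lemma bcp_inj_0: "bcp C A B P i0 i1 \<Longrightarrow> is_coproduct_injection C i0"
  using inj_of_cp[of "{0,1}" _ P _ 0] by fastforce
lemma bcp_inj_1: "bcp C A B P i0 i1 \<Longrightarrow> is_coproduct_injection C i1"
  using inj_of_cp[of "{0,1}" _ P _ 1] by fastforce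

lemma injE: "is_coproduct_injection C m \<Longrightarrow> (\<And>B n. bcp C (Dom C m) B (Cod C m) m n \<Longrightarrow> thesis) \<Longrightarrow> thesis"
  unfolding is_coproduct_injection_def by blast

lemma comp_inj: "is_coproduct_injection C m \<Longrightarrow> is_coproduct_injection C n \<Longrightarrow> Cod C m = Dom C n
   \<Longrightarrow> is_coproduct_injection C (n \<cdot> m)"
proof -
  assume im: "is_coproduct_injection C m" and iN: "is_coproduct_injection C n" and mn: "Cod C m = Dom C n"
  obtain A' m' where cm: "bcp C (Dom C m) A' (Cod C m) m m'" using injE[OF im] by blast
  obtain B' n' where cn: "bcp C (Dom C n) B' (Cod C n) n n'" using injE[OF iN] by blast
  define A B D where "A = Dom C m" and "B = Cod C m" and "D = Cod C n"
  have cm': "bcp C A A' B m m'" using cm unfolding A_def B_def .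
  have cn': "bcp C B B' D n n'" using cn unfolding B_def D_def mn .
  note hm = bcp_inj0[OF cm'] and hm' = bcp_inj1[OF cm'] and hn = bcp_inj0[OF cn'] and hn' = bcp_inj1[OF cn']
  have A'ob: "A' \<in> Ob C" and B'ob: "B' \<in> Ob C" and Dob: "D \<in> Ob C" using hom_ob hm' hn' by auto
  obtain R k0 k1 where cR: "bcp C A' B' R k0 k1" using has_bcp[OF A'ob B'ob] by blast
  note hk0 = bcp_inj0[OF cR] and hk1 = bcp_inj1[OF cR]
  have nm': "n \<cdot> m' \<in> hom C A' D" using comp_hom hm' hn by blast
  obtain r where r: "r \<in> hom C R D" "r \<cdot> k0 = n \<cdot> m'" "r \<cdot> k1 = n'" using bcp_ex[OF cR nm' hn'] by blast
  have nm: "n \<cdot> m \<in> hom C A D" using comp_hom hm hn by blast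
  have "bcp C A R D (n \<cdot> m) r"
  proof (rule bcpI[OF Dob nm r(1)])
    fix Q f0 f1 assume f0: "f0 \<in> hom C A Q" and f1: "f1 \<in> hom C R Q"
    have g0: "f1 \<cdot> k0 \<in> hom C A' Q" and g1: "f1 \<cdot> k1 \<in> hom C B' Q" using comp_hom f1 hk0 hk1 by auto
    obtain v where v: "v \<in> hom C B Q" "v \<cdot> m = f0" "v \<cdot> m' = f1 \<cdot> k0" using bcp_ex[OF cm' f0 g0] by blast
    obtain u where u: "u \<in> hom C D Q" "u \<cdot> n = v" "u \<cdot> n' = f1 \<cdot> k1" using bcp_ex[OF cn' v(1) g1] by blast
    have "u \<cdot> (n \<cdot> m) = f0" using u v hm hn by (simp add: hom_def assoc[symmetric] del: assoc)
    moreover have "u \<cdot> r = f1"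
    proof (rule bcp_uniq[OF cR comp_hom[OF r(1) u(1)] f1])
      show "(u \<cdot> r) \<cdot> k0 = f1 \<cdot> k0" using u v r hm' hn hk0 by (simp add: hom_def reassoc[OF u(2)])
      show "(u \<cdot> r) \<cdot> k1 = f1 \<cdot> k1" using u v r hn' hk1 by (simp add: hom_def)
    qed
    ultimately show "\<exists>u. u \<in> hom C D Q \<and> u \<cdot> (n \<cdot> m) = f0 \<and> u \<cdot> r = f1" using u(1) by blast
  next
    fix Q u w assume u: "u \<in> hom C D Q" and w: "w \<in> hom C D Q" and e0: "u \<cdot> (n \<cdot> m) = w \<cdot> (n \<cdot> m)"
      and e1: "u \<cdot> r = w \<cdot> r"
    have "u \<cdot> n = w \<cdot> n"
    proof (rule bcp_uniq[OF cm' comp_hom[OF hn u] comp_hom[OF hn w]])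
      show "(u \<cdot> n) \<cdot> m = (w \<cdot> n) \<cdot> m" using e0 u w hm hn by (simp add: hom_def)
      have "(u \<cdot> r) \<cdot> k0 = (w \<cdot> r) \<cdot> k0" using e1 by simp
      then show "(u \<cdot> n) \<cdot> m' = (w \<cdot> n) \<cdot> m'" using u w r hm' hn hk0 by (simp add: hom_def)
    qed
    moreover have "u \<cdot> n' = w \<cdot> n'"
    proof -
      have "(u \<cdot> r) \<cdot> k1 = (w \<cdot> r) \<cdot> k1" using e1 by simp
      then show ?thesis using u w r hn' hk1 by (simp add: hom_def)
    qed
    ultimately show "u = w" using bcp_uniq[OF cn' u w] by blast
  qed
  moreover have "n \<cdot> m \<in> Ar C" "Dom C (n \<cdot> m) = A" "Cod C (n \<cdot> m) = D" using homD[OF nm] by auto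
  ultimately show ?thesis unfolding is_coproduct_injection_def by metis
qed

lemma disj_morphs: "is_coproduct_injection C f \<Longrightarrow> g \<in> Ar C \<Longrightarrow> Cod C g = Cod C f \<Longrightarrow> disj f g \<Longrightarrow> disjoint_morphs C f g"
proof -
  assume fi: "is_coproduct_injection C f" and g: "g \<in> Ar C" and c: "Cod C g = Cod C f" and d: "disj f g"
  obtain B n where cf: "bcp C (Dom C f) B (Cod C f) f n" using injE[OF fi] by blast
  have gh: "g \<in> hom C (Dom C g) (Cod C f)" using g c by (simp add: hom_def)
  obtain Y p q where pb: "\<forall>i\<in>{0::nat,1}. is_pullback C (if i = 0 then f else n) g (Y i) (p i) (q i)"
    using univ_ex[OF cf gh] by blast
  then have pb0: "is_pullback C f g (Y 0) (p 0) (q 0)" by auto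
  then have "is_initial C (Y 0)" using pbD[OF pb0] disjD[OF d] by blast
  then show ?thesis unfolding disjoint_morphs_def using pb0 by blast
qed

end



context hx begin

lemma F_disj: "is_coproduct_injection C m \<Longrightarrow> g \<in> Ar C \<Longrightarrow> Cod C g = Cod C m \<Longrightarrow> disj m g \<Longrightarrow> disj (FA m) (FA g)"
proof -
  assume mi: "is_coproduct_injection C m" and g: "g \<in> Ar C" and c: "Cod C g = Cod C m" and d: "disj m g"
  obtain B n where cm: "bcp C (Dom C m) B (Cod C m) m n" using injE[OF mi] by blast
  have gh: "g \<in> hom C (Dom C g) (Cod C m)" using g c by (simp add: hom_def)
  obtain h where h: "h \<in> hom C (Dom C g) B" "g = n \<cdot> h" using factor[OF cm gh d] by blast
  have n: "n \<in> hom C B (Cod C m)" using bcp_inj1[OF cm] .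
  have Fg: "FA g = FA n \<cdot> FA h" using F_comp[OF h(1) n] h(2) by simp
  have d2: "disj (FA m) (FA n)" using bcp_disj[OF F_bcp[OF cm]] .
  have Fn: "FA n \<in> hom C (FO B) (FO (Cod C m))" using F_hom[OF n] .
  have Fh: "FA h \<in> hom C (FO (Dom C g)) (Dom C (FA n))" using F_hom[OF h(1)] homD[OF Fn] by simp
  show ?thesis using disj_precomp[OF d2 _ Fh] homD[OF Fn] Fg by simp
qed

end

locale sit = hx C FO FA for C :: "('o,'m) cat" and FO FA +
  fixes A a X S j0 j1 e
  assumes Aob: "A \<in> Ob C" and a: "a \<in> hom C (FO A) A" and cor: "corecursive C FO FA A a"
    and Xob: "X \<in> Ob C" and cpS: "bcp C (FO X) A S j0 j1" and e: "e \<in> hom C X S"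
begin

definition "PB = (SOME x. \<forall>i\<in>{0::nat,1}. is_pullback C (if i = 0 then j0 else j1) e (fst x i) (fst (snd x) i) (snd (snd x) i))"
definition "XH = fst PB 0"
definition "XA = fst PB 1"
definition "eH = fst (snd PB) 0"
definition "eA = fst (snd PB) 1"
definition "qH = snd (snd PB) 0"
definition "qA = snd (snd PB) 1"

lemma PB: "\<forall>i\<in>{0::nat,1}. is_pullback C (if i = 0 then j0 else j1) e (fst PB i) (fst (snd PB) i) (snd (snd PB) i)"
proof -
  obtain Y p q where "\<forall>i\<in>{0::nat,1}. is_pullback C (if i = 0 then j0 else j1) e (Y i) (p i) (q i)"
    using univ_ex[OF cpS e] by blast
  then have "\<exists>x. \<forall>i\<in>{0::nat,1}. is_pullback C (if i = 0 then j0 else j1) e (fst x i) (fst (snd x) i) (snd (snd x) i)"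
    by (intro exI[of _ "(Y,p,q)"]) simp
  from someI_ex[OF this] show ?thesis unfolding PB_def .
qed

lemma pbH: "is_pullback C j0 e XH eH qH" using PB unfolding XH_def eH_def qH_def by auto
lemma pbA: "is_pullback C j1 e XA eA qA" using PB unfolding XA_def eA_def qA_def by auto

lemma cpX: "bcp C XH XA X qH qA"
proof -
  have "is_coproduct C {0,1} (fst PB) X (snd (snd PB))" using univ_cp[OF cpS e PB] .
  then show ?thesis by (rule cp_cong) (auto simp: XH_def XA_def qH_def qA_def)
qed

lemma j0: "j0 \<in> hom C (FO X) S" using bcp_inj0[OF cpS] .
lemma j1: "j1 \<in> hom C A S" using bcp_inj1[OF cpS] .
lemma qH: "qH \<in> hom C XH X" using bcp_inj0[OF cpX] .
lemma qA: "qA \<in> hom C XA X" using bcp_inj1[OF cpX] .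
lemma eH: "eH \<in> hom C XH (FO X)" using pbD[OF pbH] homD[OF j0] by simp
lemma eA: "eA \<in> hom C XA A" using pbD[OF pbA] homD[OF j1] by simp
lemma eqH: "j0 \<cdot> eH = e \<cdot> qH" using pbD[OF pbH] by simp
lemma eqA: "j1 \<cdot> eA = e \<cdot> qA" using pbD[OF pbA] by simp

definition nxt :: "'m \<Rightarrow> 'm \<times> 'm" where
  "nxt m = (SOME x. is_pullback C (FA m) eH (Dom C (snd x)) (fst x) (snd x) \<and> is_coproduct_injection C (snd x))"

lemma nxt_ok: "is_coproduct_injection C m \<Longrightarrow> Cod C m = X \<Longrightarrow>
   is_pullback C (FA m) eH (Dom C (snd (nxt m))) (fst (nxt m)) (snd (nxt m)) \<and> is_coproduct_injection C (snd (nxt m))"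
proof -
  assume mi: "is_coproduct_injection C m" and c: "Cod C m = X"
  obtain B n where cm: "bcp C (Dom C m) B X m n" using injE[OF mi] c by metis
  have Fc: "bcp C (FO (Dom C m)) (FO B) (FO X) (FA m) (FA n)" using F_bcp[OF cm] .
  obtain Y p q where pb: "\<forall>i\<in>{0::nat,1}. is_pullback C (if i = 0 then FA m else FA n) eH (Y i) (p i) (q i)"
    using univ_ex[OF Fc eH] by blast
  have cpY: "is_coproduct C {0,1} Y XH q" using univ_cp[OF Fc eH pb] .
  have pb0: "is_pullback C (FA m) eH (Y 0) (p 0) (q 0)" using pb by auto
  have "Dom C (q 0) = Y 0" using pbD[OF pb0] homD by blast
  moreover have "is_coproduct_injection C (q 0)" using inj_of_cp[OF cpY] by simp
  ultimately have "\<exists>x. is_pullback C (FA m) eH (Dom C (snd x)) (fst x) (snd x) \<and> is_coproduct_injection C (snd x)"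
    using pb0 by (intro exI[of _ "(p 0, q 0)"]) simp
  from someI_ex[OF this] show ?thesis unfolding nxt_def .
qed

primrec M :: "nat \<Rightarrow> 'm" where
  "M 0 = qA"
| "M (Suc n) = qH \<cdot> snd (nxt (M n))"

definition "T n = fst (nxt (M n))"
definition "Yn n = snd (nxt (M n))"
definition "D n = Dom C (M n)"

lemma M_ok: "is_coproduct_injection C (M n) \<and> M n \<in> hom C (D n) X"
proof (induction n)
  case 0
  show ?case using bcp_inj_1[OF cpX] qA by (simp add: D_def hom_def)
next
  case (Suc n)
  then have mi: "is_coproduct_injection C (M n)" and c: "Cod C (M n) = X" by (auto simp: hom_def)
  note ok = nxt_ok[OF mi c]
  have y: "Yn n \<in> hom C (Dom C (Yn n)) XH" using pbD[OF conjunct1[OF ok]] homD[OF eH] by (simp add: Yn_def)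
  have "is_coproduct_injection C (qH \<cdot> Yn n)"
    by (rule comp_inj) (use ok y qH bcp_inj_0[OF cpX] in \<open>auto simp: Yn_def hom_def\<close>)
  moreover have "qH \<cdot> Yn n \<in> hom C (Dom C (Yn n)) X" using comp_hom[OF y qH] .
  ultimately show ?case by (simp add: Yn_def D_def hom_def)
qed

lemma M_inj: "is_coproduct_injection C (M n)" using M_ok by blast
lemma M_hom: "M n \<in> hom C (D n) X" using M_ok by blast
lemma D_ob: "D n \<in> Ob C" using hom_ob M_hom by blast

lemma pbn: "is_pullback C (FA (M n)) eH (D (Suc n)) (T n) (Yn n)"
proof -
  have "Cod C (M n) = X" using M_hom homD by blast
  note ok = nxt_ok[OF M_inj this]
  have y: "Yn n \<in> hom C (Dom C (Yn n)) XH" using pbD[OF conjunct1[OF ok]] homD[OF eH] by (simp add: Yn_def)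
  have "D (Suc n) = Dom C (Yn n)" using y qH by (simp add: D_def Yn_def hom_def)
  then show ?thesis using ok by (simp add: T_def Yn_def)
qed

lemma Yn: "Yn n \<in> hom C (D (Suc n)) XH" using pbD[OF pbn] homD[OF eH] by simp
lemma Tn: "T n \<in> hom C (D (Suc n)) (FO (D n))" using pbD[OF pbn] homD[OF F_hom[OF M_hom]] by simp
lemma eqn: "FA (M n) \<cdot> T n = eH \<cdot> Yn n" using pbD[OF pbn] by simp
lemma M_Suc: "M (Suc n) = qH \<cdot> Yn n" by (simp add: Yn_def)

lemma disjM: "i \<noteq> j \<Longrightarrow> disj (M i) (M j)"
proof (induction i arbitrary: j)
  case 0
  then obtain k where k: "j = Suc k" by (cases j) auto
  have "disj qA (qH \<cdot> Yn k)"
    using disj_precomp[OF disj_sym[OF bcp_disj[OF cpX]] _ ] qH Yn homD by metis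
  then show ?case using k M_Suc by simp
next
  case (Suc i)
  show ?case
  proof (cases j)
    case 0
    have "disj qA (qH \<cdot> Yn i)"
      using disj_precomp[OF disj_sym[OF bcp_disj[OF cpX]] _ ] qH Yn homD by metis
    then show ?thesis using 0 M_Suc disj_sym by simp
  next
    case (Suc k)
    with Suc.prems have ik: "i \<noteq> k" by simp
    have dik: "disj (M i) (M k)" using Suc.IH[OF ik] .
    have Fd: "disj (FA (M i)) (FA (M k))"
      by (rule F_disj[OF M_inj _ _ dik]) (use M_hom[of i] M_hom[of k] in \<open>auto simp: hom_def\<close>)
    show ?thesis unfolding disj_def
    proof (intro allI impI)
      fix W x y assume x: "x \<in> hom C W (Dom C (M (Suc i)))" and y: "y \<in> hom C W (Dom C (M j))"
        and eq: "M (Suc i) \<cdot> x = M j \<cdot> y"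
      have x': "x \<in> hom C W (D (Suc i))" and y': "y \<in> hom C W (D (Suc k))" using x y Suc by (auto simp: D_def)
      note Yi = Yn[of i] and Yk = Yn[of k]
      have "qH \<cdot> (Yn i \<cdot> x) = qH \<cdot> (Yn k \<cdot> y)"
        using eq Suc x' y' Yi Yk qH M_Suc by (simp add: hom_def)
      then have e1: "Yn i \<cdot> x = Yn k \<cdot> y"
        using monoD[OF bcp_mono0[OF cpX]] comp_hom[OF x' Yi] comp_hom[OF y' Yk] homD[OF qH] by simp
      have "FA (M i) \<cdot> (T i \<cdot> x) = eH \<cdot> (Yn i \<cdot> x)"
        using x' Tn[of i] Yi eH F_hom[OF M_hom[of i]] by (simp add: hom_def reassoc[OF eqn])
      also have "\<dots> = eH \<cdot> (Yn k \<cdot> y)" using e1 by simp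
      also have "\<dots> = FA (M k) \<cdot> (T k \<cdot> y)"
        using y' Tn[of k] Yk eH F_hom[OF M_hom[of k]] by (simp add: hom_def reassoc[OF eqn])
      finally have e2: "FA (M i) \<cdot> (T i \<cdot> x) = FA (M k) \<cdot> (T k \<cdot> y)" .
      have t1: "T i \<cdot> x \<in> hom C W (Dom C (FA (M i)))" using comp_hom[OF x' Tn] F_hom[OF M_hom[of i]] homD by metis
      have t2: "T k \<cdot> y \<in> hom C W (Dom C (FA (M k)))" using comp_hom[OF y' Tn] F_hom[OF M_hom[of k]] homD by metis
      show "is_initial C W" using disjD[OF Fd t1 t2 e2] .
    qed
  qed
qed

end



context sit begin

definition "PK = (SOME x. is_coproduct C UNIV D (fst x) (snd x))"
definition "P = fst PK"
definition "\<kappa> = snd PK"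

lemma cpP: "is_coproduct C UNIV D P \<kappa>"
proof -
  obtain P' k where "is_coproduct C UNIV D P' k" using has_cp[of UNIV D] D_ob by blast
  then have "\<exists>x. is_coproduct C UNIV D (fst x) (snd x)" by (intro exI[of _ "(P',k)"]) simp
  from someI_ex[OF this] show ?thesis unfolding PK_def P_def \<kappa>_def .
qed

lemma \<kappa>: "\<kappa> n \<in> hom C (D n) P" using cp_inj[OF cpP] by simp

definition "U = (SOME u. u \<in> hom C P X \<and> (\<forall>n. u \<cdot> \<kappa> n = M n))"

lemma U: "U \<in> hom C P X \<and> (\<forall>n. U \<cdot> \<kappa> n = M n)"
proof -
  have "\<exists>u. u \<in> hom C P X \<and> (\<forall>n\<in>UNIV. u \<cdot> \<kappa> n = M n)" using cp_ex[OF cpP Xob] M_hom by blast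
  from someI_ex[OF this[simplified]] show ?thesis unfolding U_def .
qed
lemma Uh: "U \<in> hom C P X" using U by blast
lemma UM: "U \<cdot> \<kappa> n = M n" using U by blast

lemma U_inj: "is_coproduct_injection C U"
proof -
  have coh: "coproducts_coherent C" using hyp unfolding hyper_extensive_def by blast
  have dm: "\<forall>i\<in>UNIV. \<forall>j\<in>UNIV. i \<noteq> j \<longrightarrow> disjoint_morphs C (M i) (M j)"
  proof (intro ballI impI)
    fix i j :: nat assume "i \<noteq> j"
    then show "disjoint_morphs C (M i) (M j)"
      using disj_morphs[OF M_inj _ _ disjM] M_hom[of i] M_hom[of j] by (simp add: hom_def)
  qed
  show ?thesis using coh cpP Xob M_hom M_inj dm Uh UM unfolding coproducts_coherent_def by blast
qed

definition "ZZ = (SOME x. bcp C P (fst x) X U (snd x))"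
definition "Z = fst ZZ"
definition "z = snd ZZ"

lemma cpZ: "bcp C P Z X U z"
proof -
  have "Dom C U = P" "Cod C U = X" using Uh homD by auto
  then obtain B n where "bcp C P B X U n" using injE[OF U_inj] by metis
  then have "\<exists>x. bcp C P (fst x) X U (snd x)" by (intro exI[of _ "(B,n)"]) (simp only: fst_conv snd_conv)
  from someI_ex[OF this] show ?thesis unfolding ZZ_def Z_def z_def .
qed

lemma zh: "z \<in> hom C Z X" using bcp_inj1[OF cpZ] .
lemma Zob: "Z \<in> Ob C" using hom_ob zh by blast

lemma disj_Mz: "disj (M n) z"
proof -
  have "disj z (U \<cdot> \<kappa> n)"
    using disj_precomp[OF disj_sym[OF bcp_disj[OF cpZ]] _ ] Uh \<kappa> homD by metis
  then show ?thesis using UM disj_sym by simp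
qed

definition "zH = (SOME h. h \<in> hom C Z XH \<and> z = qH \<cdot> h)"
lemma zH: "zH \<in> hom C Z XH \<and> z = qH \<cdot> zH"
proof -
  have "\<exists>h. h \<in> hom C Z XH \<and> z = qH \<cdot> h"
    using factor[OF bcp_swap[OF cpX] zh] disj_Mz[of 0] by simp
  from someI_ex[OF this] show ?thesis unfolding zH_def .
qed
lemma zHh: "zH \<in> hom C Z XH" using zH by blast
lemma zHe: "z = qH \<cdot> zH" using zH by blast

lemma ez_ex: "\<exists>ez. ez \<in> hom C Z (FO Z) \<and> FA z \<cdot> ez = eH \<cdot> zH"
proof -
  note Fc = F_bcp[OF cpZ]
  define g where "g = eH \<cdot> zH"
  have g: "g \<in> hom C Z (FO X)" unfolding g_def using comp_hom[OF zHh eH] .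
  obtain Y2 p2 q2 where pb: "\<forall>i\<in>{0::nat,1}. is_pullback C (if i = 0 then FA U else FA z) g (Y2 i) (p2 i) (q2 i)"
    using univ_ex[OF Fc g] by blast
  have cp2: "bcp C (Y2 0) (Y2 1) Z (q2 0) (q2 1)"
    using univ_cp[OF Fc g pb] by (rule cp_cong) auto
  have pb0: "is_pullback C (FA U) g (Y2 0) (p2 0) (q2 0)" using pb by auto
  have pb1: "is_pullback C (FA z) g (Y2 1) (p2 1) (q2 1)" using pb by auto
  have FU: "FA U \<in> hom C (FO P) (FO X)" using F_hom[OF Uh] .
  have Fz: "FA z \<in> hom C (FO Z) (FO X)" using F_hom[OF zh] .
  have p20: "p2 0 \<in> hom C (Y2 0) (FO P)" and q20: "q2 0 \<in> hom C (Y2 0) Z" and e20: "FA U \<cdot> p2 0 = g \<cdot> q2 0"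
    using pbD[OF pb0] homD[OF FU] homD[OF g] by auto
  have p21: "p2 1 \<in> hom C (Y2 1) (FO Z)" and q21: "q2 1 \<in> hom C (Y2 1) Z" and e21: "FA z \<cdot> p2 1 = g \<cdot> q2 1"
    using pbD[OF pb1] homD[OF Fz] homD[OF g] by auto
  note FcP = F_cp[OF cpP]
  obtain Y3 p3 q3 where pb3: "\<forall>n\<in>UNIV. is_pullback C (FA (\<kappa> n)) (p2 0) (Y3 n) (p3 n) (q3 n)"
    using univ_ex[OF FcP p20] by blast
  have cp3: "is_coproduct C UNIV Y3 (Y2 0) q3" using univ_cp[OF FcP p20 pb3] .
  have "is_initial C (Y3 n)" for n
  proof -
    have pbn3: "is_pullback C (FA (\<kappa> n)) (p2 0) (Y3 n) (p3 n) (q3 n)" using pb3 by auto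
    have Fk: "FA (\<kappa> n) \<in> hom C (FO (D n)) (FO P)" using F_hom[OF \<kappa>] .
    have p3: "p3 n \<in> hom C (Y3 n) (FO (D n))" and q3: "q3 n \<in> hom C (Y3 n) (Y2 0)"
      and e3: "FA (\<kappa> n) \<cdot> p3 n = p2 0 \<cdot> q3 n"
      using pbD[OF pbn3] homD[OF Fk] homD[OF p20] by auto
    define y where "y = zH \<cdot> q2 0 \<cdot> q3 n"
    have y: "y \<in> hom C (Y3 n) XH" unfolding y_def using comp_hom[OF q3 comp_hom[OF q20 zHh]]
      using q3 q20 zHh by (simp add: hom_def)
    have FM: "FA (M n) = FA U \<cdot> FA (\<kappa> n)" using F_comp[OF \<kappa> Uh] UM by simp
    have "FA (M n) \<cdot> p3 n = FA U \<cdot> FA (\<kappa> n) \<cdot> p3 n" using FM FU Fk p3 by (simp add: hom_def)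
    also have "\<dots> = FA U \<cdot> p2 0 \<cdot> q3 n" using e3 by simp
    also have "\<dots> = g \<cdot> q2 0 \<cdot> q3 n" using FU p20 q3 q20 g by (simp add: hom_def reassoc[OF e20])
    also have "\<dots> = eH \<cdot> y" unfolding g_def y_def using eH zHh q20 q3 by (simp add: hom_def)
    finally have eqy: "FA (M n) \<cdot> p3 n = eH \<cdot> y" .
    have FMh: "FA (M n) \<in> hom C (FO (D n)) (FO X)" using F_hom[OF M_hom] .
    have p3': "p3 n \<in> hom C (Y3 n) (Dom C (FA (M n)))" using p3 homD[OF FMh] by simp
    have y': "y \<in> hom C (Y3 n) (Dom C eH)" using y homD[OF eH] by simp
    obtain w where w: "w \<in> hom C (Y3 n) (D (Suc n))" "T n \<cdot> w = p3 n" "Yn n \<cdot> w = y"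
      using pb_univ[OF pbn p3' y' eqy] by blast
    have "M (Suc n) \<cdot> w = qH \<cdot> (Yn n \<cdot> w)"
      using M_Suc w qH Yn by (simp add: hom_def)
    also have "\<dots> = qH \<cdot> zH \<cdot> q2 0 \<cdot> q3 n" using w(3) unfolding y_def by simp
    also have "\<dots> = z \<cdot> (q2 0 \<cdot> q3 n)" using zHe qH zHh q20 q3 by (simp add: hom_def)
    finally have "M (Suc n) \<cdot> w = z \<cdot> (q2 0 \<cdot> q3 n)" .
    moreover have "w \<in> hom C (Y3 n) (Dom C (M (Suc n)))" using w(1) by (simp add: D_def)
    moreover have "q2 0 \<cdot> q3 n \<in> hom C (Y3 n) (Dom C z)" using comp_hom[OF q3 q20] homD[OF zh] by simp
    ultimately show ?thesis using disjD[OF disj_Mz] by blast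
  qed
  then have "is_initial C (Y2 0)" using cp_initial[OF cp3] by blast
  then obtain r where r: "r \<in> hom C Z (Y2 1)" "q2 1 \<cdot> r = Idt C Z" using retract[OF cp2] by blast
  have "FA z \<cdot> (p2 1 \<cdot> r) = (g \<cdot> q2 1) \<cdot> r"
    by (rule reassoc[OF e21]) (use Fz p21 q21 r(1) g in \<open>simp_all add: hom_def\<close>)
  also have "\<dots> = g \<cdot> (q2 1 \<cdot> r)"
    by (rule assoc) (use Fz p21 q21 r(1) g in \<open>simp_all add: hom_def\<close>)
  also have "\<dots> = g" using r(2) g by (simp add: hom_def)
  finally show ?thesis using comp_hom[OF r(1) p21] unfolding g_def by blast
qed

definition "ez = (SOME ez. ez \<in> hom C Z (FO Z) \<and> FA z \<cdot> ez = eH \<cdot> zH)"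
lemma ezh: "ez \<in> hom C Z (FO Z)" and ezeq: "FA z \<cdot> ez = eH \<cdot> zH"
  using someI_ex[OF ez_ex] unfolding ez_def by auto

end



context sit begin

primrec sq :: "nat \<Rightarrow> 'm" where
  "sq 0 = eA"
| "sq (Suc n) = a \<cdot> FA (sq n) \<cdot> T n"

lemma D0: "D 0 = XA" using qA by (simp add: D_def hom_def)

lemma sqh: "sq n \<in> hom C (D n) A"
proof (induction n)
  case 0 then show ?case using eA D0 by simp
next
  case (Suc n)
  have "FA (sq n) \<cdot> T n \<in> hom C (D (Suc n)) (FO A)" using comp_hom[OF Tn F_hom[OF Suc]] .
  then show ?case using comp_hom a by simp
qed

lemma cor_ex1: "\<exists>!s. s \<in> hom C Z A \<and> s = a \<cdot> FA s \<cdot> ez"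
proof -
  have H: "\<forall>X e. X \<in> Ob C \<longrightarrow> e \<in> hom C X (FO X) \<longrightarrow> (\<exists>!s. s \<in> hom C X A \<and> s = a \<cdot> FA s \<cdot> e)"
    using cor unfolding corecursive_def .
  show ?thesis using H[rule_format, OF Zob ezh] .
qed

definition "sZ = (THE s. s \<in> hom C Z A \<and> s = a \<cdot> FA s \<cdot> ez)"
lemma sZ: "sZ \<in> hom C Z A \<and> sZ = a \<cdot> FA sZ \<cdot> ez"
  unfolding sZ_def using theI'[OF cor_ex1] .
lemma sZ_uniq: "s \<in> hom C Z A \<Longrightarrow> s = a \<cdot> FA s \<cdot> ez \<Longrightarrow> s = sZ"
proof -
  assume "s \<in> hom C Z A" "s = a \<cdot> FA s \<cdot> ez"
  then have "(THE s. s \<in> hom C Z A \<and> s = a \<cdot> FA s \<cdot> ez) = s"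
    by (intro the1_equality[OF cor_ex1]) simp
  then show ?thesis unfolding sZ_def by simp
qed

definition "sP = (SOME u. u \<in> hom C P A \<and> (\<forall>n. u \<cdot> \<kappa> n = sq n))"
lemma sP: "sP \<in> hom C P A \<and> (\<forall>n. sP \<cdot> \<kappa> n = sq n)"
proof -
  have "\<exists>u. u \<in> hom C P A \<and> (\<forall>n\<in>UNIV. u \<cdot> \<kappa> n = sq n)" using cp_ex[OF cpP Aob] sqh by blast
  from someI_ex[OF this[simplified]] show ?thesis unfolding sP_def .
qed

definition "s0 = (SOME s. s \<in> hom C X A \<and> s \<cdot> U = sP \<and> s \<cdot> z = sZ)"
lemma s0: "s0 \<in> hom C X A \<and> s0 \<cdot> U = sP \<and> s0 \<cdot> z = sZ"
proof -
  have "\<exists>s. s \<in> hom C X A \<and> s \<cdot> U = sP \<and> s \<cdot> z = sZ" using bcp_ex[OF cpZ] sP sZ by blast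
  from someI_ex[OF this] show ?thesis unfolding s0_def .
qed

lemma s0M: "s0 \<cdot> M n = sq n"
proof -
  have "s0 \<cdot> M n = (s0 \<cdot> U) \<cdot> \<kappa> n" using UM[of n] conjunct1[OF s0] Uh \<kappa> by (simp add: hom_def)
  then show ?thesis using s0 sP by simp
qed

lemma JE: "f \<in> hom C X Q \<Longrightarrow> g \<in> hom C X Q \<Longrightarrow> (\<And>n. f \<cdot> M n = g \<cdot> M n) \<Longrightarrow> f \<cdot> z = g \<cdot> z \<Longrightarrow> f = g"
proof -
  assume f: "f \<in> hom C X Q" and g: "g \<in> hom C X Q" and eM: "\<And>n. f \<cdot> M n = g \<cdot> M n" and ez: "f \<cdot> z = g \<cdot> z"
  have "f \<cdot> U = g \<cdot> U"
  proof (rule cp_uniq[OF cpP comp_hom[OF Uh f] comp_hom[OF Uh g]])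
    fix n
    have "(f \<cdot> U) \<cdot> \<kappa> n = f \<cdot> M n" using UM[of n] f Uh \<kappa> by (simp add: hom_def)
    moreover have "(g \<cdot> U) \<cdot> \<kappa> n = g \<cdot> M n" using UM[of n] g Uh \<kappa> by (simp add: hom_def)
    ultimately show "(f \<cdot> U) \<cdot> \<kappa> n = (g \<cdot> U) \<cdot> \<kappa> n" using eM by simp
  qed
  then show ?thesis using bcp_uniq[OF cpZ f g] ez by blast
qed

context
  fixes g uu
  assumes g: "g \<in> hom C X A" and uu: "uu \<in> hom C S A" and u0: "uu \<cdot> j0 = a \<cdot> FA g" and u1: "uu \<cdot> j1 = Idt C A"
begin

lemma L0: "(uu \<cdot> e) \<cdot> M 0 = eA"
proof -
  have "(uu \<cdot> e) \<cdot> M 0 = uu \<cdot> (e \<cdot> qA)" using uu e qA by (simp add: hom_def)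
  also have "\<dots> = uu \<cdot> (j1 \<cdot> eA)" using eqA by simp
  also have "\<dots> = (uu \<cdot> j1) \<cdot> eA" using uu j1 eA by (simp add: hom_def)
  also have "\<dots> = eA" using u1 eA by (simp add: hom_def)
  finally show ?thesis .
qed

lemma LS: "(uu \<cdot> e) \<cdot> M (Suc n) = a \<cdot> FA (g \<cdot> M n) \<cdot> T n"
proof -
  note FM = F_hom[OF M_hom[of n]] and Fg = F_hom[OF g]
  have "(uu \<cdot> e) \<cdot> M (Suc n) = uu \<cdot> ((e \<cdot> qH) \<cdot> Yn n)" using uu e qH Yn M_Suc by (simp add: hom_def)
  also have "\<dots> = uu \<cdot> ((j0 \<cdot> eH) \<cdot> Yn n)" using eqH by simp
  also have "\<dots> = (uu \<cdot> j0) \<cdot> (eH \<cdot> Yn n)" using uu j0 eH Yn by (simp add: hom_def)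
  also have "\<dots> = (a \<cdot> FA g) \<cdot> (FA (M n) \<cdot> T n)" using u0 eqn by simp
  also have "\<dots> = a \<cdot> ((FA g \<cdot> FA (M n)) \<cdot> T n)" using a Fg FM Tn by (simp add: hom_def)
  also have "\<dots> = a \<cdot> FA (g \<cdot> M n) \<cdot> T n" using F_comp[OF M_hom g] by simp
  finally show ?thesis .
qed

lemma LZ: "(uu \<cdot> e) \<cdot> z = a \<cdot> FA (g \<cdot> z) \<cdot> ez"
proof -
  note Fz = F_hom[OF zh] and Fg = F_hom[OF g]
  have "(uu \<cdot> e) \<cdot> z = uu \<cdot> ((e \<cdot> qH) \<cdot> zH)" using uu e qH zHh zHe by (simp add: hom_def)
  also have "\<dots> = uu \<cdot> ((j0 \<cdot> eH) \<cdot> zH)" using eqH by simp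
  also have "\<dots> = (uu \<cdot> j0) \<cdot> (eH \<cdot> zH)" using uu j0 eH zHh by (simp add: hom_def)
  also have "\<dots> = (a \<cdot> FA g) \<cdot> (FA z \<cdot> ez)" using u0 ezeq by simp
  also have "\<dots> = a \<cdot> ((FA g \<cdot> FA z) \<cdot> ez)" using a Fg Fz ezh by (simp add: hom_def)
  also have "\<dots> = a \<cdot> FA (g \<cdot> z) \<cdot> ez" using F_comp[OF zh g] by simp
  finally show ?thesis .
qed

end

lemma cia_sol: "\<exists>!s. s \<in> hom C X A \<and>
   (\<forall>u. u \<in> hom C S A \<longrightarrow> u \<cdot> j0 = a \<cdot> FA s \<longrightarrow> u \<cdot> j1 = Idt C A \<longrightarrow> s = u \<cdot> e)"
proof (rule ex1I[of _ s0])
  show "s0 \<in> hom C X A \<and> (\<forall>u. u \<in> hom C S A \<longrightarrow> u \<cdot> j0 = a \<cdot> FA s0 \<longrightarrow> u \<cdot> j1 = Idt C A \<longrightarrow> s0 = u \<cdot> e)"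
  proof (intro conjI allI impI)
    show s0h: "s0 \<in> hom C X A" using s0 by blast
    fix uu assume uu: "uu \<in> hom C S A" and u0: "uu \<cdot> j0 = a \<cdot> FA s0" and u1: "uu \<cdot> j1 = Idt C A"
    show "s0 = uu \<cdot> e"
    proof (rule JE[OF s0h comp_hom[OF e uu]])
      fix n show "s0 \<cdot> M n = (uu \<cdot> e) \<cdot> M n"
      proof (cases n)
        case 0 then show ?thesis using L0[OF s0h uu u0 u1] s0M[of 0] by simp
      next
        case (Suc k) then show ?thesis using LS[OF s0h uu u0 u1, of k] s0M[of k] s0M[of n] by simp
      qed
    next
      show "s0 \<cdot> z = (uu \<cdot> e) \<cdot> z" using LZ[OF s0h uu u0 u1] s0 sZ by simp
    qed
  qed
next
  fix s assume H: "s \<in> hom C X A \<and> (\<forall>u. u \<in> hom C S A \<longrightarrow> u \<cdot> j0 = a \<cdot> FA s \<longrightarrow> u \<cdot> j1 = Idt C A \<longrightarrow> s = u \<cdot> e)"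
  then have sh: "s \<in> hom C X A" by blast
  have as: "a \<cdot> FA s \<in> hom C (FO X) A" using comp_hom[OF F_hom[OF sh] a] .
  obtain uu where uu: "uu \<in> hom C S A" "uu \<cdot> j0 = a \<cdot> FA s" "uu \<cdot> j1 = Idt C A"
    using bcp_ex[OF cpS as id_hom[OF Aob]] by blast
  have se: "s = uu \<cdot> e" using H uu by blast
  have sM: "s \<cdot> M n = sq n" for n
  proof (induction n)
    case 0 then show ?case using L0[OF sh uu] se by simp
  next
    case (Suc n) then show ?case using LS[OF sh uu, of n] se by simp
  qed
  have "s \<cdot> z = sZ"
  proof (rule sZ_uniq)
    show "s \<cdot> z \<in> hom C Z A" using comp_hom[OF zh sh] .
    show "s \<cdot> z = a \<cdot> FA (s \<cdot> z) \<cdot> ez" using LZ[OF sh uu] se by simp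
  qed
  then show "s = s0" using JE[OF sh conjunct1[OF s0]] sM s0M s0 by simp
qed

end



context hx begin

lemma cia_cor: "A \<in> Ob C \<Longrightarrow> a \<in> hom C (FO A) A \<Longrightarrow> is_cia C FO FA A a \<Longrightarrow> corecursive C FO FA A a"
  unfolding corecursive_def
proof (intro allI impI)
  fix X e0 assume Aob: "A \<in> Ob C" and a: "a \<in> hom C (FO A) A" and cia: "is_cia C FO FA A a"
    and Xob: "X \<in> Ob C" and e0: "e0 \<in> hom C X (FO X)"
  have FX: "FO X \<in> Ob C" using hom_ob e0 by blast
  obtain S i0 i1 where cp: "bcp C (FO X) A S i0 i1" using has_bcp[OF FX Aob] by blast
  have i0: "i0 \<in> hom C (FO X) S" and i1: "i1 \<in> hom C A S" using bcp_inj0[OF cp] bcp_inj1[OF cp] by auto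
  have e: "i0 \<cdot> e0 \<in> hom C X S" using comp_hom[OF e0 i0] .
  have H: "\<forall>X S \<iota> e. X \<in> Ob C \<longrightarrow>
        is_coproduct C {0, 1} (\<lambda>i. if i = 0 then FO X else A) S \<iota> \<longrightarrow>
        e \<in> hom C X S \<longrightarrow>
        (\<exists>!s. s \<in> hom C X A \<and>
           (\<forall>u. u \<in> hom C S A \<longrightarrow> u \<cdot> (\<iota> 0) = a \<cdot> (FA s) \<longrightarrow>
                u \<cdot> (\<iota> 1) = Idt C A \<longrightarrow> s = u \<cdot> e))"
    using cia unfolding is_cia_def .
  have ex: "\<exists>!s. s \<in> hom C X A \<and>
           (\<forall>u. u \<in> hom C S A \<longrightarrow> u \<cdot> i0 = a \<cdot> (FA s) \<longrightarrow> u \<cdot> i1 = Idt C A \<longrightarrow> s = u \<cdot> (i0 \<cdot> e0))"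
    using H[rule_format, OF Xob cp e] by simp
  have eq: "(\<forall>u. u \<in> hom C S A \<longrightarrow> u \<cdot> i0 = a \<cdot> (FA s) \<longrightarrow> u \<cdot> i1 = Idt C A \<longrightarrow> s = u \<cdot> (i0 \<cdot> e0))
      \<longleftrightarrow> s = a \<cdot> FA s \<cdot> e0" if s: "s \<in> hom C X A" for s
  proof
    have as: "a \<cdot> FA s \<in> hom C (FO X) A" using comp_hom[OF F_hom[OF s] a] .
    assume L: "\<forall>u. u \<in> hom C S A \<longrightarrow> u \<cdot> i0 = a \<cdot> (FA s) \<longrightarrow> u \<cdot> i1 = Idt C A \<longrightarrow> s = u \<cdot> (i0 \<cdot> e0)"
    obtain u where u: "u \<in> hom C S A" "u \<cdot> i0 = a \<cdot> FA s" "u \<cdot> i1 = Idt C A"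
      using bcp_ex[OF cp as id_hom[OF Aob]] by blast
    have "s = u \<cdot> (i0 \<cdot> e0)" using L u by blast
    also have "\<dots> = (u \<cdot> i0) \<cdot> e0" using u(1) i0 e0 by (simp add: hom_def)
    also have "\<dots> = (a \<cdot> FA s) \<cdot> e0" using u(2) by simp
    also have "\<dots> = a \<cdot> FA s \<cdot> e0" using a F_hom[OF s] e0 by (simp add: hom_def)
    finally show "s = a \<cdot> FA s \<cdot> e0" .
  next
    assume R: "s = a \<cdot> FA s \<cdot> e0"
    show "\<forall>u. u \<in> hom C S A \<longrightarrow> u \<cdot> i0 = a \<cdot> (FA s) \<longrightarrow> u \<cdot> i1 = Idt C A \<longrightarrow> s = u \<cdot> (i0 \<cdot> e0)"
    proof (intro allI impI)
      fix u assume u: "u \<in> hom C S A" and u0: "u \<cdot> i0 = a \<cdot> FA s"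
      have "u \<cdot> (i0 \<cdot> e0) = (u \<cdot> i0) \<cdot> e0" using u i0 e0 by (simp add: hom_def)
      also have "\<dots> = (a \<cdot> FA s) \<cdot> e0" using u0 by simp
      also have "\<dots> = a \<cdot> FA s \<cdot> e0" using a F_hom[OF s] e0 by (simp add: hom_def)
      finally show "s = u \<cdot> (i0 \<cdot> e0)" using R by simp
    qed
  qed
  from ex obtain s where s: "s \<in> hom C X A"
    "\<forall>u. u \<in> hom C S A \<longrightarrow> u \<cdot> i0 = a \<cdot> (FA s) \<longrightarrow> u \<cdot> i1 = Idt C A \<longrightarrow> s = u \<cdot> (i0 \<cdot> e0)"
    and un: "\<And>t. t \<in> hom C X A \<and>
           (\<forall>u. u \<in> hom C S A \<longrightarrow> u \<cdot> i0 = a \<cdot> (FA t) \<longrightarrow> u \<cdot> i1 = Idt C A \<longrightarrow> t = u \<cdot> (i0 \<cdot> e0)) \<Longrightarrow> t = s"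
    by (elim ex1E) blast
  show "\<exists>!s. s \<in> hom C X A \<and> s = a \<cdot> FA s \<cdot> e0"
  proof (rule ex1I[of _ s])
    show "s \<in> hom C X A \<and> s = a \<cdot> FA s \<cdot> e0" using s eq[OF s(1)] by blast
    fix t assume t: "t \<in> hom C X A \<and> t = a \<cdot> FA t \<cdot> e0"
    then show "t = s" using un eq[of t] by blast
  qed
qed

end

theorem mainTheorem4:
  fixes C :: "('o, 'm) cat" and FO :: "'o \<Rightarrow> 'o" and FA :: "'m \<Rightarrow> 'm"
  assumes "hyper_extensive C"
    and "is_endofunctor C FO FA"
    and "preserves_countable_coproducts C FO FA"
    and "has_terminal_coalgebra C FO FA"
  shows "(\<forall>A a. A \<in> Ob C \<longrightarrow> a \<in> hom C (FO A) A \<longrightarrow> corecursive C FO FA A a \<longrightarrow> is_cia C FO FA A a)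
       \<and> (\<forall>A a. A \<in> Ob C \<longrightarrow> a \<in> hom C (FO A) A \<longrightarrow> (corecursive C FO FA A a \<longleftrightarrow> is_cia C FO FA A a))"
proof -
  interpret hx C FO FA
    by unfold_locales (use assms in \<open>auto simp: hyper_extensive_def\<close>)
  have P1: "is_cia C FO FA A a" if A: "A \<in> Ob C" and a: "a \<in> hom C (FO A) A" and cor: "corecursive C FO FA A a" for A a
    unfolding is_cia_def
  proof (intro allI impI)
    fix X S \<iota> e
    assume X: "X \<in> Ob C" and cp: "is_coproduct C {0, 1} (\<lambda>i. if i = 0 then FO X else A) S \<iota>" and e: "e \<in> hom C X S"
    have cp': "bcp C (FO X) A S (\<iota> 0) (\<iota> 1)" by (rule cp_cong[OF cp]) auto
    interpret sit C FO FA A a X S "\<iota> 0" "\<iota> 1" e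
      by unfold_locales (use A a cor X cp' e in auto)
    show "\<exists>!s. s \<in> hom C X A \<and>
           (\<forall>u. u \<in> hom C S A \<longrightarrow> u \<cdot> \<iota> 0 = a \<cdot> FA s \<longrightarrow> u \<cdot> \<iota> 1 = Idt C A \<longrightarrow> s = u \<cdot> e)"
      using cia_sol .
  qed
  show ?thesis using P1 cia_cor by blast
qed



end
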